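(* Let $G$ be a finite group and let $N$ be a non-trivial normal subgroup of $G$ with $|N|=p^a$ for some prime $p$. Then for every pair $x_1,x_2$ of elements of $G$ there exist $n_1,n_2\in N$ such that $p$ divides the order of $\langle x_1n_1,x_2n_2\rangle$. *)

theory Defs
  imports "HOL-Algebra.Algebra"
begin

end

theory Submission
  imports Defs
begin

lemma (in group) pgroup_center_nontriv:
  assumes fin: "finite (carrier G)" and p: "Factorial_Ring.prime (p::nat)" and ord: "order G = p ^ k" and k: "k \<ge> 1"
  shows "\<exists>z\<in>carrier G. z \<noteq> \<one> \<and> (\<forall>y\<in>carrier G. z \<otimes> y = y \<otimes> z)"
proof (rule ccontr)
  assume nz: "\<not> ?thesis"
  define \<phi> where "\<phi> = (\<lambda>g. (\<lambda>h \<in> carrier G. g \<otimes> h \<otimes> (inv g)))"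
  interpret A: group_action G "carrier G" \<phi>
    unfolding \<phi>_def by (rule action_by_conjugation)
  define Os where "Os = orbits G (carrier G) \<phi>"
  have osim: "Os = (\<lambda>x. orbit G \<phi> x) ` carrier G" unfolding Os_def orbits_def by blast
  hence finO: "finite Os" using fin by simp
  have sumO: "(\<Sum>orb\<in>Os. card orb) = p ^ k"
  proof -
    have e: "sum (\<lambda>x. 1::nat) = card" by (rule ext) (rule card_eq_sum[symmetric])
    show ?thesis
    using A.disjoint_sum[OF fin, of "\<lambda>_. 1::nat"] ord unfolding Os_def order_def e
    by simp
  qed
  have o1: "orbit G \<phi> \<one> = {\<one>}"
    unfolding orbit_def \<phi>_def by (auto intro!: exI[of _ \<one>])
  have "orbit G \<phi> \<one> \<in> Os" unfolding Os_def orbits_def by blast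
  hence o1Os: "{\<one>} \<in> Os" using o1 by simp
  have dv: "p dvd card orb" if oo: "orb \<in> Os" "orb \<noteq> {\<one>}" for orb
  proof -
    obtain x where x: "x \<in> carrier G" "orb = orbit G \<phi> x"
      using oo(1) osim by blast
    have "card orb dvd p ^ k"
      using A.orbit_stabilizer_theorem[OF x(1)] x ord by (metis dvd_triv_left)
    then obtain j where j: "card orb = p ^ j" using p by (auto simp: divides_primepow_nat)
    have "card orb \<noteq> 1"
    proof
      assume c1: "card orb = 1"
      have "x \<in> orb" using A.orbit_refl[OF x(1)] x by simp
      with c1 have ox: "orb = {x}" by (auto simp: card_1_singleton_iff)
      have "\<forall>y\<in>carrier G. x \<otimes> y = y \<otimes> x"
      proof
        fix y assume y: "y \<in> carrier G"
        have "\<phi> y x \<in> orb" unfolding x(2) orbit_def using y by auto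
        hence "y \<otimes> x \<otimes> inv y = x" using ox x(1) unfolding \<phi>_def by simp
        hence "y \<otimes> x \<otimes> inv y \<otimes> y = x \<otimes> y" by simp
        thus "x \<otimes> y = y \<otimes> x" using x(1) y by (simp add: m_assoc)
      qed
      with nz x(1) have "x = \<one>" by blast
      with x o1 oo show False by simp
    qed
    with j have "j \<noteq> 0" by auto
    with j show ?thesis by simp
  qed
  have "(\<Sum>orb\<in>Os. card orb) = card {\<one>} + (\<Sum>orb\<in>Os - {{\<one>}}. card orb)"
    using finO o1Os by (meson sum.remove)
  hence e1: "p ^ k = (\<Sum>orb\<in>Os - {{\<one>}}. card orb) + 1" using sumO by simp
  have d1: "p dvd (\<Sum>orb\<in>Os - {{\<one>}}. card orb)"
    by (rule dvd_sum) (use dv in auto)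
  have "p dvd p ^ k" using k by simp
  hence "p dvd (\<Sum>orb\<in>Os - {{\<one>}}. card orb) + 1" using e1 by simp
  hence "p dvd 1" using d1 dvd_add_right_iff by blast
  thus False using p by simp
qed


lemma (in group) cancel1 [simp]:
  "x \<in> carrier G \<Longrightarrow> y \<in> carrier G \<Longrightarrow> x \<otimes> (inv x \<otimes> y) = y"
  by (simp add: m_assoc[symmetric])

lemma (in group) cancel2 [simp]:
  "x \<in> carrier G \<Longrightarrow> y \<in> carrier G \<Longrightarrow> inv x \<otimes> (x \<otimes> y) = y"
  by (simp add: m_assoc[symmetric])

lemma (in group) card_subgroup_dvd:
  assumes "subgroup A G" "subgroup B G" "A \<subseteq> B"
  shows "card A dvd card B"
proof -
  interpret B: group "G\<lparr>carrier := B\<rparr>" using subgroup_imp_group[OF assms(2)] .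
  have "subgroup A (G\<lparr>carrier := B\<rparr>)" by (rule subgroup_incl[OF assms])
  from B.lagrange[OF this] show ?thesis unfolding order_def
    by (metis dvd_triv_right partial_object.select_convs(1) partial_object.surjective partial_object.update_convs(1))
qed

lemma (in group) trivial_inter:
  assumes K: "subgroup K G" and Z: "subgroup Z G" and p: "Factorial_Ring.prime (p::nat)"
    and cZ: "card Z = p ^ k" and fin: "finite (carrier G)" and Kp: "\<not> p dvd card K"
  shows "K \<inter> Z = {\<one>}"
proof -
  have I: "subgroup (K \<inter> Z) G" by (rule subgroups_Inter_pair[OF K Z])
  have "card (K \<inter> Z) dvd card Z" by (rule card_subgroup_dvd[OF I Z]) auto
  then obtain i where i: "card (K \<inter> Z) = p ^ i" using p cZ by (auto simp: divides_primepow_nat)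
  have "card (K \<inter> Z) dvd card K" by (rule card_subgroup_dvd[OF I K]) auto
  hence "i = 0" using i Kp
    by (metis dvd_power dvd_trans not_gr0)
  hence c1: "card (K \<inter> Z) = 1" using i by simp
  have "\<one> \<in> K \<inter> Z" using I subgroup.one_closed by blast
  thus ?thesis using c1 by (metis card_1_singletonE singletonD)
qed

lemma (in group) conj_pow:
  assumes r: "r \<in> carrier G" and y: "y \<in> carrier G"
  shows "inv r \<otimes> (y [^] (m::nat)) \<otimes> r = (inv r \<otimes> y \<otimes> r) [^] m"
proof (induction m)
  case 0
  then show ?case using r by simp
next
  case (Suc m)
  have "inv r \<otimes> (y [^] Suc m) \<otimes> r = (inv r \<otimes> (y [^] m) \<otimes> r) \<otimes> (inv r \<otimes> y \<otimes> r)"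
    using r y by (simp add: m_assoc)
  also have "\<dots> = (inv r \<otimes> y \<otimes> r) [^] Suc m" using Suc r y by simp
  finally show ?case .
qed

lemma (in group) conj_finprod:
  assumes cg: "comm_group (G\<lparr>carrier := Z\<rparr>)" and ZN: "Z \<lhd> G" and r: "r \<in> carrier G"
    and fA: "finite A"
  shows "f \<in> A \<rightarrow> Z \<Longrightarrow> finprod (G\<lparr>carrier := Z\<rparr>) (\<lambda>q. inv r \<otimes> f q \<otimes> r) A
           = inv r \<otimes> finprod (G\<lparr>carrier := Z\<rparr>) f A \<otimes> r"
  using fA
proof (induction A rule: finite_induct)
  case empty
  interpret Zg: comm_group "G\<lparr>carrier := Z\<rparr>" by (rule cg)
  show ?case using r by simp
next
  case (insert x A)
  interpret Zg: comm_group "G\<lparr>carrier := Z\<rparr>" by (rule cg)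
  have ZG: "Z \<subseteq> carrier G" using ZN normal_imp_subgroup subgroup.subset by blast
  have cl: "inv r \<otimes> z \<otimes> r \<in> Z" if "z \<in> Z" for z
    using normal.inv_op_closed1[OF ZN r that] .
  have fx: "f x \<in> Z" and fA: "f \<in> A \<rightarrow> Z" using insert.prems by auto
  have P: "finprod (G\<lparr>carrier := Z\<rparr>) f A \<in> Z"
    using Zg.finprod_closed[of f A] fA by simp
  have "finprod (G\<lparr>carrier := Z\<rparr>) (\<lambda>q. inv r \<otimes> f q \<otimes> r) (insert x A)
      = (inv r \<otimes> f x \<otimes> r) \<otimes> finprod (G\<lparr>carrier := Z\<rparr>) (\<lambda>q. inv r \<otimes> f q \<otimes> r) A"
    using Zg.finprod_insert[OF insert.hyps, of "\<lambda>q. inv r \<otimes> f q \<otimes> r"] cl fx fA by auto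
  also have "\<dots> = (inv r \<otimes> f x \<otimes> r) \<otimes> (inv r \<otimes> finprod (G\<lparr>carrier := Z\<rparr>) f A \<otimes> r)"
    using insert.IH fA by simp
  also have "\<dots> = inv r \<otimes> (f x \<otimes> finprod (G\<lparr>carrier := Z\<rparr>) f A) \<otimes> r"
    using r fx P ZG by (simp add: m_assoc subsetD)
  also have "f x \<otimes> finprod (G\<lparr>carrier := Z\<rparr>) f A = finprod (G\<lparr>carrier := Z\<rparr>) f (insert x A)"
    using Zg.finprod_insert[OF insert.hyps, of f] fx fA by auto
  finally show ?case .
qed


lemma (in group) cocycle_main:
  assumes fin: "finite (carrier G)"
    and ZN: "Z \<lhd> G" and Zc: "\<And>x y. x \<in> Z \<Longrightarrow> y \<in> Z \<Longrightarrow> x \<otimes> y = y \<otimes> x"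
    and p: "Factorial_Ring.prime (p::nat)" and cZ: "card Z = p ^ k"
    and a: "a \<in> carrier G" and b: "b \<in> carrier G" and n: "n \<in> Z"
    and Hp: "\<not> p dvd card (generate G {a, b})"
    and Kp: "\<not> p dvd card (generate G {a, b \<otimes> n})"
  shows "\<exists>v\<in>Z. a \<otimes> v = v \<otimes> a \<and> b \<otimes> n = inv v \<otimes> b \<otimes> v"
proof -
  define H where "H = generate G {a, b}"
  define K where "K = generate G {a, b \<otimes> n}"
  have Zs: "subgroup Z G" using ZN normal_imp_subgroup by blast
  have ZG: "Z \<subseteq> carrier G" using Zs subgroup.subset by blast
  have nG: "n \<in> carrier G" using n ZG by blast
  have Hs: "subgroup H G" unfolding H_def using a b by (intro generate_is_subgroup) auto
  have Ks: "subgroup K G" unfolding K_def using a b nG by (intro generate_is_subgroup) auto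
  have HG: "H \<subseteq> carrier G" using Hs subgroup.subset by blast
  have KG: "K \<subseteq> carrier G" using Ks subgroup.subset by blast
  have aK: "a \<in> K" and bnK: "b \<otimes> n \<in> K" unfolding K_def by (auto intro: generate.incl)
  have aH: "a \<in> H" and bH: "b \<in> H" unfolding H_def by (auto intro: generate.incl)
  have KZ: "K \<inter> Z = {\<one>}" by (rule trivial_inter[OF Ks Zs p cZ fin]) (use Kp K_def in simp)
  have cl: "inv r \<otimes> z \<otimes> r \<in> Z" if "z \<in> Z" "r \<in> carrier G" for z r
    using normal.inv_op_closed1[OF ZN that(2) that(1)] .
  have cl2: "r \<otimes> z \<otimes> inv r \<in> Z" if "z \<in> Z" "r \<in> carrier G" for z r
    using normal.inv_op_closed2[OF ZN that(2) that(1)] .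
  have ZKs: "subgroup (Z <#> K) G" by (rule mult_norm_subgroup[OF ZN Ks])
  have "{a, b} \<subseteq> Z <#> K"
  proof -
    have "a = \<one> \<otimes> a" using a by simp
    hence aZK: "a \<in> Z <#> K" unfolding set_mult_def using aK subgroup.one_closed[OF Zs] by blast
    have "b = (b \<otimes> inv n \<otimes> inv b) \<otimes> (b \<otimes> n)"
      using nG b by (simp add: m_assoc)
    moreover have "b \<otimes> inv n \<otimes> inv b \<in> Z" using cl2[OF subgroup.m_inv_closed[OF Zs n] b] .
    ultimately have "b \<in> Z <#> K" unfolding set_mult_def using bnK by blast
    with aZK show ?thesis by blast
  qed
  hence HZK: "H \<subseteq> Z <#> K" unfolding H_def by (rule generate_subgroup_incl[OF _ ZKs])
  have ex: "\<exists>k. k \<in> K \<and> inv q \<otimes> k \<in> Z" if "q \<in> H" for q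
  proof -
    from that HZK obtain z k where zk: "z \<in> Z" "k \<in> K" "q = z \<otimes> k"
      unfolding set_mult_def by blast
    have "inv q \<otimes> k = inv k \<otimes> inv z \<otimes> k"
      using zk ZG KG by (simp add: inv_mult_group subsetD)
    also have "\<dots> \<in> Z" using cl[OF subgroup.m_inv_closed[OF Zs zk(1)]] zk(2) KG by blast
    finally show ?thesis using zk by blast
  qed
  define \<sigma> where "\<sigma> q = (SOME k. k \<in> K \<and> inv q \<otimes> k \<in> Z)" for q
  have \<sigma>: "\<sigma> q \<in> K \<and> inv q \<otimes> \<sigma> q \<in> Z" if "q \<in> H" for q
    unfolding \<sigma>_def using someI_ex[OF ex[OF that]] .
  have uniq: "\<sigma> q = k" if "q \<in> H" "k \<in> K" "inv q \<otimes> k \<in> Z" for q k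
  proof -
    have qG: "q \<in> carrier G" using that HG by blast
    have sK: "\<sigma> q \<in> K" and sZ: "inv q \<otimes> \<sigma> q \<in> Z" using \<sigma>[OF that(1)] by auto
    have sG: "\<sigma> q \<in> carrier G" and kG: "k \<in> carrier G" using sK that(2) KG by auto
    have "inv (inv q \<otimes> \<sigma> q) \<otimes> (inv q \<otimes> k) \<in> Z"
      by (rule subgroup.m_closed[OF Zs subgroup.m_inv_closed[OF Zs sZ] that(3)])
    moreover have "inv (inv q \<otimes> \<sigma> q) \<otimes> (inv q \<otimes> k) = inv (\<sigma> q) \<otimes> k"
      using qG sG kG by (simp add: inv_mult_group m_assoc)
    moreover have "inv (\<sigma> q) \<otimes> k \<in> K" by (rule subgroup.m_closed[OF Ks subgroup.m_inv_closed[OF Ks sK] that(2)])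
    ultimately have "inv (\<sigma> q) \<otimes> k = \<one>" using KZ by auto
    hence "\<sigma> q \<otimes> (inv (\<sigma> q) \<otimes> k) = \<sigma> q" using sG by simp
    thus ?thesis using sG kG by simp
  qed
  have hom: "\<sigma> (q1 \<otimes> q2) = \<sigma> q1 \<otimes> \<sigma> q2" if q: "q1 \<in> H" "q2 \<in> H" for q1 q2
  proof (rule uniq)
    show "q1 \<otimes> q2 \<in> H" using subgroup.m_closed[OF Hs q] .
    show "\<sigma> q1 \<otimes> \<sigma> q2 \<in> K" using subgroup.m_closed[OF Ks] \<sigma>[OF q(1)] \<sigma>[OF q(2)] by blast
    have q1G: "q1 \<in> carrier G" and q2G: "q2 \<in> carrier G" using q HG by auto
    have s1: "\<sigma> q1 \<in> carrier G" and s2: "\<sigma> q2 \<in> carrier G" using \<sigma>[OF q(1)] \<sigma>[OF q(2)] KG by auto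
    have "inv (q1 \<otimes> q2) \<otimes> (\<sigma> q1 \<otimes> \<sigma> q2) = (inv q2 \<otimes> (inv q1 \<otimes> \<sigma> q1) \<otimes> q2) \<otimes> (inv q2 \<otimes> \<sigma> q2)"
      using q1G q2G s1 s2 by (simp add: inv_mult_group m_assoc)
    also have "\<dots> \<in> Z"
      using subgroup.m_closed[OF Zs cl[OF conjunct2[OF \<sigma>[OF q(1)]] q2G] conjunct2[OF \<sigma>[OF q(2)]]] .
    finally show "inv (q1 \<otimes> q2) \<otimes> (\<sigma> q1 \<otimes> \<sigma> q2) \<in> Z" .
  qed
  define \<delta> where "\<delta> q = inv q \<otimes> \<sigma> q" for q
  have \<delta>Z: "\<delta> q \<in> Z" if "q \<in> H" for q using \<sigma>[OF that] unfolding \<delta>_def by blast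
  have \<delta>hom: "\<delta> (q1 \<otimes> r) = (inv r \<otimes> \<delta> q1 \<otimes> r) \<otimes> \<delta> r" if q: "q1 \<in> H" "r \<in> H" for q1 r
  proof -
    have q1G: "q1 \<in> carrier G" and q2G: "r \<in> carrier G" using q HG by auto
    have s1: "\<sigma> q1 \<in> carrier G" and s2: "\<sigma> r \<in> carrier G" using \<sigma>[OF q(1)] \<sigma>[OF q(2)] KG by auto
    show ?thesis unfolding \<delta>_def hom[OF q]
      using q1G q2G s1 s2 by (simp add: inv_mult_group m_assoc)
  qed
  have cgZ: "comm_group (G\<lparr>carrier := Z\<rparr>)"
    using group.group_comm_groupI[OF subgroup_imp_group[OF Zs]] Zc by simp
  interpret Zg: comm_group "G\<lparr>carrier := Z\<rparr>" by (rule cgZ)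
  have finH: "finite H" using fin HG finite_subset by blast
  have \<delta>P: "\<delta> \<in> H \<rightarrow> Z" using \<delta>Z by blast
  define u where "u = finprod (G\<lparr>carrier := Z\<rparr>) \<delta> H"
  have uZ: "u \<in> Z" unfolding u_def using Zg.finprod_closed[of \<delta> H] \<delta>P by simp
  have key: "\<delta> r [^] card H = inv (inv r \<otimes> u \<otimes> r) \<otimes> u" if r: "r \<in> H" for r
  proof -
    have rG: "r \<in> carrier G" using r HG by blast
    have img: "(\<lambda>q. q \<otimes> r) ` H = H"
    proof
      show "(\<lambda>q. q \<otimes> r) ` H \<subseteq> H" using subgroup.m_closed[OF Hs _ r] by blast
      show "H \<subseteq> (\<lambda>q. q \<otimes> r) ` H"
      proof
        fix q assume q: "q \<in> H"
        have "q = (q \<otimes> inv r) \<otimes> r" using q rG HG by (simp add: m_assoc subsetD)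
        moreover have "q \<otimes> inv r \<in> H" using subgroup.m_closed[OF Hs q subgroup.m_inv_closed[OF Hs r]] .
        ultimately show "q \<in> (\<lambda>q. q \<otimes> r) ` H" by blast
      qed
    qed
    have inj: "inj_on (\<lambda>q. q \<otimes> r) H"
      unfolding inj_on_def using rG HG by (auto simp: subsetD)
    have "u = finprod (G\<lparr>carrier := Z\<rparr>) \<delta> ((\<lambda>q. q \<otimes> r) ` H)" unfolding u_def img ..
    also have "\<dots> = finprod (G\<lparr>carrier := Z\<rparr>) (\<lambda>q. \<delta> (q \<otimes> r)) H"
      using Zg.finprod_reindex[of \<delta> "\<lambda>q. q \<otimes> r" H] img inj \<delta>P by simp
    also have "\<dots> = finprod (G\<lparr>carrier := Z\<rparr>) (\<lambda>q. (inv r \<otimes> \<delta> q \<otimes> r) \<otimes> \<delta> r) H"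
      using Zg.finprod_cong'[of H H "\<lambda>q. (inv r \<otimes> \<delta> q \<otimes> r) \<otimes> \<delta> r" "\<lambda>q. \<delta> (q \<otimes> r)"]
        \<delta>hom[OF _ r] subgroup.m_closed[OF Zs cl[OF \<delta>Z rG] \<delta>Z[OF r]] by auto
    also have "\<dots> = finprod (G\<lparr>carrier := Z\<rparr>) (\<lambda>q. inv r \<otimes> \<delta> q \<otimes> r) H \<otimes> finprod (G\<lparr>carrier := Z\<rparr>) (\<lambda>q. \<delta> r) H"
      using Zg.finprod_multf[of "\<lambda>q. inv r \<otimes> \<delta> q \<otimes> r" H "\<lambda>q. \<delta> r"] cl[OF \<delta>Z rG] \<delta>Z[OF r] by auto
    also have "\<dots> = (inv r \<otimes> u \<otimes> r) \<otimes> \<delta> r [^] card H"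
      using conj_finprod[OF cgZ ZN rG finH \<delta>P] Zg.finprod_const[of "\<delta> r" H] \<delta>Z[OF r]
      unfolding u_def by (simp add: nat_pow_consistent[symmetric])
    finally have e: "u = (inv r \<otimes> u \<otimes> r) \<otimes> \<delta> r [^] card H" .
    have cG: "inv r \<otimes> u \<otimes> r \<in> carrier G" using cl[OF uZ rG] ZG by blast
    have dG: "\<delta> r [^] card H \<in> carrier G" using \<delta>Z[OF r] ZG by blast
    show ?thesis using e cancel2[OF cG dG] by metis
  qed
  have "\<one> \<in> H" using subgroup.one_closed[OF Hs] .
  hence hne: "card H \<noteq> 0" using finH by auto
  have "coprime p (card H)" using prime_imp_coprime[OF p] Hp unfolding H_def by blast
  hence cop: "coprime (card H) (card Z)" using cZ by (simp add: coprime_commute)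
  obtain x y where xy: "card H * x = card Z * y + 1"
    using bezout_nat[OF hne, of "card Z"] cop by (auto simp: coprime_iff_gcd_eq_1)
  define v where "v = u [^] x"
  have vZ: "v \<in> Z" unfolding v_def using Zg.nat_pow_closed[of u x] uZ by (simp add: nat_pow_consistent[symmetric])
  have vG: "v \<in> carrier G" using vZ ZG by blast
  have uG: "u \<in> carrier G" using uZ ZG by blast
  have ordZ: "w [^] card Z = \<one>" if "w \<in> Z" for w
    using Zg.pow_order_eq_1[of w] that unfolding order_def by (simp add: nat_pow_consistent[symmetric])
  have sform: "\<sigma> r = inv v \<otimes> r \<otimes> v" if r: "r \<in> H" for r
  proof -
    have rG: "r \<in> carrier G" using r HG by blast
    have dZ: "\<delta> r \<in> Z" using \<delta>Z[OF r] .
    have dG: "\<delta> r \<in> carrier G" using dZ ZG by blast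
    have sG: "\<sigma> r \<in> carrier G" using \<sigma>[OF r] KG by blast
    have "\<delta> r [^] (card H * x) = \<delta> r [^] (card Z * y + 1)" using xy by simp
    also have "\<dots> = (\<delta> r [^] card Z) [^] y \<otimes> \<delta> r"
      using dG by (simp add: nat_pow_pow[symmetric] nat_pow_mult[symmetric])
    also have "\<dots> = \<delta> r" using ordZ[OF dZ] dG by simp
    finally have e1: "\<delta> r = (\<delta> r [^] card H) [^] x" using dG by (simp add: nat_pow_pow)
    define c where "c = inv r \<otimes> u \<otimes> r"
    have cZ': "c \<in> Z" unfolding c_def using cl[OF uZ rG] .
    have cG: "c \<in> carrier G" using cZ' ZG by blast
    have "\<delta> r = (inv c \<otimes> u) [^] x" using e1 key[OF r] unfolding c_def by simp
    also have "\<dots> = inv c [^] x \<otimes> u [^] x"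
      using pow_mult_distrib[of "inv c" u x] Zc[OF subgroup.m_inv_closed[OF Zs cZ'] uZ] cG uG by simp
    also have "\<dots> = inv (inv r \<otimes> v \<otimes> r) \<otimes> v"
      unfolding v_def c_def using nat_pow_inv[of "inv r \<otimes> u \<otimes> r" x] conj_pow[OF rG uG, of x] rG uG by simp
    finally have e2: "\<delta> r = inv (inv r \<otimes> v \<otimes> r) \<otimes> v" .
    have "\<sigma> r = r \<otimes> \<delta> r" unfolding \<delta>_def using rG sG by simp
    also have "\<dots> = inv v \<otimes> r \<otimes> v" unfolding e2 using rG vG by (simp add: inv_mult_group m_assoc)
    finally show ?thesis .
  qed
  have sa: "\<sigma> a = a" by (rule uniq[OF aH aK]) (use a subgroup.one_closed[OF Zs] in simp)
  have sb: "\<sigma> b = b \<otimes> n" by (rule uniq[OF bH bnK]) (use b nG n in simp)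
  have ea: "a = inv v \<otimes> a \<otimes> v" using sform[OF aH] sa by simp
  have "v \<otimes> a = v \<otimes> (inv v \<otimes> a \<otimes> v)" using ea by simp
  also have "\<dots> = a \<otimes> v" using vG a by (simp add: m_assoc)
  finally have "a \<otimes> v = v \<otimes> a" by simp
  moreover have "b \<otimes> n = inv v \<otimes> b \<otimes> v" using sform[OF bH] sb by simp
  ultimately show ?thesis using vZ by blast
qed


theorem lemma2p3:
  fixes G (structure) and N :: "'a set" and p a :: nat and x1 x2 :: 'a
  assumes "group G" and "finite (carrier G)"
    and "N \<lhd> G" and "N \<noteq> {\<one>}"
    and "Factorial_Ring.prime p" and "card N = p ^ a"
    and "x1 \<in> carrier G" and "x2 \<in> carrier G"
  shows "\<exists>n1\<in>N. \<exists>n2\<in>N. p dvd card (generate G {x1 \<otimes> n1, x2 \<otimes> n2})"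
proof (rule ccontr)
  assume neg: "\<not> ?thesis"
  interpret group G by (rule assms(1))
  note fin = assms(2) and NN = assms(3) and p = assms(5) and x1 = assms(7) and x2 = assms(8)
  have Ns: "subgroup N G" using NN normal_imp_subgroup by blast
  have NG: "N \<subseteq> carrier G" using Ns subgroup.subset by blast
  have finN: "finite N" using fin NG finite_subset by blast
  have oneN: "\<one> \<in> N" using subgroup.one_closed[OF Ns] .
  have "a \<noteq> 0"
  proof
    assume "a = 0"
    hence "card N = 1" using assms(6) by simp
    thus False using oneN assms(4) by (metis card_1_singletonE singletonD)
  qed
  hence a1: "a \<ge> 1" by simp
  interpret NGr: group "G\<lparr>carrier := N\<rparr>" using subgroup_imp_group[OF Ns] .
  obtain z where z: "z \<in> N" "z \<noteq> \<one>" "\<forall>y\<in>N. z \<otimes> y = y \<otimes> z"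
    using NGr.pgroup_center_nontriv[of p a] finN p assms(6) a1 unfolding order_def by auto
  define Nz where "Nz = {w \<in> N. \<forall>y\<in>N. w \<otimes> y = y \<otimes> w}"
  have NzN: "Nz \<subseteq> N" unfolding Nz_def by blast
  have NzG: "Nz \<subseteq> carrier G" using NzN NG by blast
  have zNz: "z \<in> Nz" unfolding Nz_def using z by blast
  have Nzs: "subgroup Nz G"
  proof
    show "Nz \<subseteq> carrier G" by (rule NzG)
    show "\<one> \<in> Nz" unfolding Nz_def using oneN NG by (auto simp: subsetD)
    fix w1 w2 assume w1: "w1 \<in> Nz" and w2: "w2 \<in> Nz"
    have w1G: "w1 \<in> carrier G" and w2G: "w2 \<in> carrier G" using w1 w2 NzG by auto
    have "w1 \<otimes> w2 \<in> N" using subgroup.m_closed[OF Ns] w1 w2 NzN by blast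
    moreover have "w1 \<otimes> w2 \<otimes> y = y \<otimes> (w1 \<otimes> w2)" if y: "y \<in> N" for y
    proof -
      have yG: "y \<in> carrier G" using y NG by blast
      have "w1 \<otimes> w2 \<otimes> y = w1 \<otimes> (y \<otimes> w2)" using w2 y w1G w2G yG unfolding Nz_def by (simp add: m_assoc)
      also have "\<dots> = (w1 \<otimes> y) \<otimes> w2" using w1G w2G yG by (simp add: m_assoc)
      also have "\<dots> = y \<otimes> (w1 \<otimes> w2)" using w1 y w1G w2G yG unfolding Nz_def by (simp add: m_assoc)
      finally show ?thesis .
    qed
    ultimately show "w1 \<otimes> w2 \<in> Nz" unfolding Nz_def by blast
  next
    fix w assume w: "w \<in> Nz"
    have wG: "w \<in> carrier G" using w NzG by blast
    have "inv w \<in> N" using subgroup.m_inv_closed[OF Ns] w NzN by blast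
    moreover have "inv w \<otimes> y = y \<otimes> inv w" if y: "y \<in> N" for y
    proof -
      have yG: "y \<in> carrier G" using y NG by blast
      have c: "w \<otimes> y = y \<otimes> w" using w y unfolding Nz_def by blast
      have "inv w \<otimes> y = inv w \<otimes> (y \<otimes> w) \<otimes> inv w" using wG yG by (simp add: m_assoc)
      also have "\<dots> = inv w \<otimes> (w \<otimes> y) \<otimes> inv w" using c by simp
      also have "\<dots> = y \<otimes> inv w" using wG yG by simp
      finally show ?thesis .
    qed
    ultimately show "inv w \<in> Nz" unfolding Nz_def by blast
  qed
  have Nzn: "Nz \<lhd> G"
    unfolding normal_inv_iff
  proof (intro conjI ballI)
    show "subgroup Nz G" by (rule Nzs)
    fix g w assume g: "g \<in> carrier G" and w: "w \<in> Nz"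
    have wG: "w \<in> carrier G" using w NzG by blast
    have "g \<otimes> w \<otimes> inv g \<in> N" using normal.inv_op_closed2[OF NN g] w NzN by blast
    moreover have "g \<otimes> w \<otimes> inv g \<otimes> y = y \<otimes> (g \<otimes> w \<otimes> inv g)" if y: "y \<in> N" for y
    proof -
      have yG: "y \<in> carrier G" using y NG by blast
      have yc: "inv g \<otimes> y \<otimes> g \<in> N" using normal.inv_op_closed1[OF NN g y] .
      hence c: "w \<otimes> (inv g \<otimes> y \<otimes> g) = (inv g \<otimes> y \<otimes> g) \<otimes> w" using w unfolding Nz_def by blast
      have "g \<otimes> w \<otimes> inv g \<otimes> y = g \<otimes> (w \<otimes> (inv g \<otimes> y \<otimes> g)) \<otimes> inv g"
        using g wG yG by (simp add: m_assoc)
      also have "\<dots> = g \<otimes> ((inv g \<otimes> y \<otimes> g) \<otimes> w) \<otimes> inv g" using c by simp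
      also have "\<dots> = y \<otimes> (g \<otimes> w \<otimes> inv g)" using g wG yG by (simp add: m_assoc)
      finally show ?thesis .
    qed
    ultimately show "g \<otimes> w \<otimes> inv g \<in> Nz" unfolding Nz_def by blast
  qed
  have Nzc: "w1 \<otimes> w2 = w2 \<otimes> w1" if "w1 \<in> Nz" "w2 \<in> Nz" for w1 w2
    using that unfolding Nz_def by blast
  have "card Nz dvd card N" by (rule card_subgroup_dvd[OF Nzs Ns NzN])
  then obtain j where cNz: "card Nz = p ^ j" using p assms(6) by (auto simp: divides_primepow_nat)
  have np: "\<not> p dvd card (generate G {x1 \<otimes> n1, x2 \<otimes> n2})" if "n1 \<in> Nz" "n2 \<in> Nz" for n1 n2
    using neg that NzN by blast
  have H1: "\<not> p dvd card (generate G {x1, x2 \<otimes> n})" if "n \<in> Nz" for n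
    using np[OF subgroup.one_closed[OF Nzs] that] x1 by simp
  have H0: "\<not> p dvd card (generate G {x1, x2})"
    using H1[OF subgroup.one_closed[OF Nzs]] x2 by simp
  have H2: "\<not> p dvd card (generate G {x2, x1 \<otimes> n})" if "n \<in> Nz" for n
    using np[OF that subgroup.one_closed[OF Nzs]] x2 by (simp add: insert_commute)
  have H0': "\<not> p dvd card (generate G {x2, x1})" using H0 by (simp add: insert_commute)
  have A1: "\<exists>v\<in>Nz. x1 \<otimes> v = v \<otimes> x1 \<and> x2 \<otimes> n = inv v \<otimes> x2 \<otimes> v" if "n \<in> Nz" for n
    by (rule cocycle_main[OF fin Nzn Nzc p cNz x1 x2 that H0 H1[OF that]])
  have A2: "\<exists>v\<in>Nz. x2 \<otimes> v = v \<otimes> x2 \<and> x1 \<otimes> n = inv v \<otimes> x1 \<otimes> v" if "n \<in> Nz" for n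
    by (rule cocycle_main[OF fin Nzn Nzc p cNz x2 x1 that H0' H2[OF that]])
  define C where "C = {v \<in> Nz. x1 \<otimes> v = v \<otimes> x1}"
  define \<phi> where "\<phi> v = inv x2 \<otimes> (inv v \<otimes> x2 \<otimes> v)" for v
  have "Nz \<subseteq> \<phi> ` C"
  proof
    fix n assume n: "n \<in> Nz"
    obtain v where v: "v \<in> Nz" "x1 \<otimes> v = v \<otimes> x1" "x2 \<otimes> n = inv v \<otimes> x2 \<otimes> v" using A1[OF n] by blast
    have "n = inv x2 \<otimes> (x2 \<otimes> n)" using n NzG x2 by (simp add: subsetD)
    also have "\<dots> = \<phi> v" unfolding \<phi>_def using v(3) by simp
    finally show "n \<in> \<phi> ` C" unfolding C_def using v by blast
  qed
  have finNz: "finite Nz" using finN NzN finite_subset by blast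
  have CNz: "C \<subseteq> Nz" unfolding C_def by blast
  have "card Nz \<le> card (\<phi> ` C)" using \<open>Nz \<subseteq> \<phi> ` C\<close> finNz CNz
    by (meson card_mono finite_imageI finite_subset)
  also have "\<dots> \<le> card C" using card_image_le finNz CNz finite_subset by blast
  finally have "C = Nz" using card_subset_eq[OF finNz CNz] card_mono[OF finNz CNz] by linarith
  hence x1c: "x1 \<otimes> v = v \<otimes> x1" if "v \<in> Nz" for v using that unfolding C_def by blast
  obtain v where v: "v \<in> Nz" "x1 \<otimes> z = inv v \<otimes> x1 \<otimes> v" using A2[OF zNz] by blast
  have vG: "v \<in> carrier G" using v NzG by blast
  have "inv v \<otimes> x1 \<otimes> v = inv v \<otimes> (x1 \<otimes> v)" using vG x1 by (simp add: m_assoc)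
  also have "\<dots> = x1" using x1c[OF v(1)] vG x1 by simp
  finally have "x1 \<otimes> z = x1 \<otimes> \<one>" using v x1 by simp
  hence "z = \<one>" using x1 z NG by (metis l_cancel one_closed subsetD)
  thus False using z by blast
qed

end
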